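(* Let $(\mathsf{X},\mu)$, $(\mathsf{Y},\nu)$ be Polish probability spaces, $c:\mathsf{X}\times\mathsf{Y}\to[0,\infty)$ continuous, $\pi_\varepsilon$ the $(c,\varepsilon)$-cyclically invariant coupling for each $\varepsilon>0$ (assumed to exist), and assume $\pi_\varepsilon\to\pi_*$ weakly as $\varepsilon\to0$ for some $\pi_*\in\Pi(\mu,\nu)$. Let $\Gamma:=\operatorname{spt}\pi_*$ and let $I$ be defined from $\Gamma$ as below. Then for any compact set $C\subset\mathsf{X}\times\mathsf{Y}$, $$\limsup_{\varepsilon\to0}\varepsilon\log\pi_\varepsilon(C)\le-\inf_{(x,y)\in C}I(x,y).$$
   Context: $\Pi(\mu,\nu)$ is the set of couplings of $\mu,\nu$ and $P:=\mu\otimes\nu$. A coupling $\pi\in\Pi(\mu,\nu)$ is $(c,\varepsilon)$-cyclically invariant if $\pi\sim P$ and its density admits a version $\frac{d\pi}{dP}:\mathsf{X}\times\mathsf{Y}\to(0,\infty)$ such that $\prod_{i=1}^k\frac{d\pi}{dP}(x_i,y_i)=\exp\big(-\frac1\varepsilon[\sum_{i=1}^k c(x_i,y_i)-\sum_{i=1}^k c(x_i,y_{i+1})]\big)\prod_{i=1}^k\frac{d\pi}{dP}(x_i,y_{i+1})$ for all $k\in\mathbb{N}$ and $(x_i,y_i)_{i=1}^k$, with $y_{k+1}:=y_1$; it is unique if it exists. The support $\Gamma$ of such a limit is $c$-cyclically monotone. The function $I:\mathsf{X}\times\mathsf{Y}\to[0,\infty]$ is $$I(x,y):=\sup_{k\ge2}\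 \sup_{(x_i,y_i)_{i=2}^k\subset\Gamma}\ \sup_{\sigma\in\Sigma(k)}\ \sum_{i=1}^k c(x_i,y_i)-\sum_{i=1}^k c(x_i,y_{\sigma(i)}),\quad (x_1,y_1):=(x,y),$$ where $\Sigma(k)$ is the set of permutations of $\{1,\dots,k\}$. *)

theory Defs
  imports "HOL-Probability.Probability"
begin

definition coupling :: "'a measure \<Rightarrow> 'b measure \<Rightarrow> ('a \<times> 'b) measure \<Rightarrow> bool" where
  "coupling \<mu> \<nu> \<pi> \<longleftrightarrow> prob_space \<pi> \<and> sets \<pi> = sets (\<mu> \<Otimes>\<^sub>M \<nu>)
     \<and> distr \<pi> \<mu> fst = \<mu> \<and> distr \<pi> \<nu> snd = \<nu>"

text \<open>(c,eps)-cyclically invariant coupling; the cycle (x_i,y_i), i<k, is closed by y_k := y_0.\<close>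
definition cyclically_invariant ::
  "('a \<Rightarrow> 'b \<Rightarrow> real) \<Rightarrow> real \<Rightarrow> 'a measure \<Rightarrow> 'b measure \<Rightarrow> ('a \<times> 'b) measure \<Rightarrow> bool" where
  "cyclically_invariant c \<epsilon> \<mu> \<nu> \<pi> \<longleftrightarrow>
     coupling \<mu> \<nu> \<pi> \<and>
     absolutely_continuous (\<mu> \<Otimes>\<^sub>M \<nu>) \<pi> \<and> absolutely_continuous \<pi> (\<mu> \<Otimes>\<^sub>M \<nu>) \<and>
     (\<exists>f :: 'a \<times> 'b \<Rightarrow> real.
        f \<in> borel_measurable (\<mu> \<Otimes>\<^sub>M \<nu>) \<and> (\<forall>z. 0 < f z) \<and>
        \<pi> = density (\<mu> \<Otimes>\<^sub>M \<nu>) (\<lambda>z. ennreal (f z)) \<and>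
        (\<forall>k::nat. \<forall>(x :: nat \<Rightarrow> 'a) (y :: nat \<Rightarrow> 'b). 1 \<le> k \<longrightarrow>
           (\<Prod>i<k. f (x i, y i)) =
           exp (- (1 / \<epsilon>) * ((\<Sum>i<k. c (x i) (y i)) - (\<Sum>i<k. c (x i) (y (Suc i mod k)))))
           * (\<Prod>i<k. f (x i, y (Suc i mod k)))))"

definition support :: "('c::topological_space) measure \<Rightarrow> 'c set" where
  "support M = {z. \<forall>U. open U \<longrightarrow> z \<in> U \<longrightarrow> emeasure M U \<noteq> 0}"

definition weak_conv_at0 :: "(real \<Rightarrow> ('c::topological_space) measure) \<Rightarrow> 'c measure \<Rightarrow> bool" where
  "weak_conv_at0 P Q \<longleftrightarrow>
     (\<forall>g :: 'c \<Rightarrow> real. continuous_on UNIV g \<longrightarrow> bounded (range g) \<longrightarrow>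
        ((\<lambda>\<epsilon>. integral\<^sup>L (P \<epsilon>) g) \<longlongrightarrow> integral\<^sup>L Q g) (at_right 0))"

text \<open>The rate function I; index 0 plays the role of index 1 in the paper.\<close>
definition rate_I :: "('a \<Rightarrow> 'b \<Rightarrow> real) \<Rightarrow> ('a \<times> 'b) set \<Rightarrow> 'a \<Rightarrow> 'b \<Rightarrow> ereal" where
  "rate_I c \<Gamma> x y = Sup {ereal ((\<Sum>i<k. c (xs i) (ys i)) - (\<Sum>i<k. c (xs i) (ys (\<sigma> i))))
      | (k::nat) xs ys \<sigma>. 2 \<le> k \<and> xs 0 = x \<and> ys 0 = y \<and> (\<forall>i\<in>{1..<k}. (xs i, ys i) \<in> \<Gamma>)
                 \<and> \<sigma> permutes {..<k}}"

definition eps_log :: "real \<Rightarrow> real \<Rightarrow> ereal" where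
  "eps_log \<epsilon> p = (if p = 0 then -\<infinity> else ereal (\<epsilon> * ln p))"

end

theory Submission
  imports Defs
begin

lemma decomp:
  fixes f :: "'a \<times> 'b \<Rightarrow> real" and c :: "'a \<Rightarrow> 'b \<Rightarrow> real"
  assumes pos: "\<forall>z. 0 < f z" and eps: "\<epsilon> > 0"
    and cyc: "\<forall>k::nat. \<forall>(x :: nat \<Rightarrow> 'a) (y :: nat \<Rightarrow> 'b). 1 \<le> k \<longrightarrow>
           (\<Prod>i<k. f (x i, y i)) =
           exp (- (1 / \<epsilon>) * ((\<Sum>i<k. c (x i) (y i)) - (\<Sum>i<k. c (x i) (y (Suc i mod k)))))
           * (\<Prod>i<k. f (x i, y (Suc i mod k)))"
  shows "f (x, y) = (f (x, y0) * exp (c x y0 / \<epsilon>)) *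
           (f (x0, y) * exp (c x0 y / \<epsilon>) * exp (- c x0 y0 / \<epsilon>) / f (x0, y0)) * exp (- c x y / \<epsilon>)"
proof -
  note H = cyc[rule_format, of 2 "\<lambda>i. if i = 0 then x else x0" "\<lambda>i. if i = 0 then y else y0", simplified]
  then have e: "f (x, y) * f (x0, y0) = exp (- (1 / \<epsilon>) * ((c x y + c x0 y0) - (c x y0 + c x0 y))) * (f (x, y0) * f (x0, y))"
    using H by (simp add: numeral_2_eq_2)
  have ex: "exp (- (1 / \<epsilon>) * ((c x y + c x0 y0) - (c x y0 + c x0 y))) =
     exp (- c x y / \<epsilon>) * exp (- c x0 y0 / \<epsilon>) * exp (c x y0 / \<epsilon>) * exp (c x0 y / \<epsilon>)"
  proof -
    have "- (1 / \<epsilon>) * ((c x y + c x0 y0) - (c x y0 + c x0 y)) =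
      - c x y / \<epsilon> + - c x0 y0 / \<epsilon> + c x y0 / \<epsilon> + c x0 y / \<epsilon>"
      using eps by (simp add: field_simps)
    then show ?thesis by (simp add: exp_add[symmetric])
  qed
  have "f (x0, y0) > 0" using pos by simp
  then show ?thesis using e unfolding ex by (simp add: field_simps)
qed

lemma nn_prod:
  fixes g :: "'a \<Rightarrow> ennreal" and h :: "'b \<Rightarrow> ennreal"
  assumes "sigma_finite_measure N" "g \<in> borel_measurable M" "h \<in> borel_measurable N"
  shows "(\<integral>\<^sup>+ z. g (fst z) * h (snd z) \<partial>(M \<Otimes>\<^sub>M N)) = (\<integral>\<^sup>+ x. g x \<partial>M) * (\<integral>\<^sup>+ y. h y \<partial>N)"
proof -
  have "(\<integral>\<^sup>+ z. g (fst z) * h (snd z) \<partial>(M \<Otimes>\<^sub>M N)) = (\<integral>\<^sup>+ x. \<integral>\<^sup>+ y. g x * h y \<partial>N \<partial>M)"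
    using sigma_finite_measure.nn_integral_fst[OF assms(1), of "\<lambda>z. g (fst z) * h (snd z)" M] assms
    by simp
  also have "\<dots> = (\<integral>\<^sup>+ x. g x * (\<integral>\<^sup>+ y. h y \<partial>N) \<partial>M)"
    using assms by (simp add: nn_integral_cmult)
  also have "\<dots> = (\<integral>\<^sup>+ x. g x \<partial>M) * (\<integral>\<^sup>+ y. h y \<partial>N)"
    using assms by (simp add: nn_integral_multc)
  finally show ?thesis .
qed

lemma perm_bound:
  fixes P :: "nat \<Rightarrow> nat \<Rightarrow> ennreal" and \<alpha> \<beta> :: "nat \<Rightarrow> ennreal" and cc :: "nat \<Rightarrow> nat \<Rightarrow> real"
  assumes sig: "\<sigma> permutes {..<k}" and eps: "\<epsilon> > 0"
    and up: "\<forall>i<k. \<forall>j<k. P i j \<le> ennreal (exp (- (cc i j - \<eta>) / \<epsilon>)) * (\<alpha> i * \<beta> j)"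
    and lo: "\<forall>i<k. \<forall>j<k. ennreal (exp (- (cc i j + \<eta>) / \<epsilon>)) * (\<alpha> i * \<beta> j) \<le> P i j"
    and le1: "\<forall>i j. P i j \<le> 1"
  shows "(\<Prod>i<k. P i i) \<le> ennreal (exp (- ((\<Sum>i<k. cc i i) - (\<Sum>i<k. cc i (\<sigma> i)) - 2 * real k * \<eta>) / \<epsilon>))"
proof -
  have sk: "\<And>i. i < k \<Longrightarrow> \<sigma> i < k" using sig by (meson lessThan_iff permutes_in_image)
  define X1 where "X1 = (\<Prod>i<k. exp (- (cc i i - \<eta>) / \<epsilon>))"
  define X2 where "X2 = (\<Prod>i<k. exp (- (cc i (\<sigma> i) + \<eta>) / \<epsilon>))"
  define Q where "Q = (\<Prod>i<k. \<alpha> i) * (\<Prod>i<k. \<beta> i)"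
  have X2pos: "X2 > 0" unfolding X2_def by (simp add: prod_pos)
  have h1: "(\<Prod>i<k. P i i) \<le> (\<Prod>i<k. ennreal (exp (- (cc i i - \<eta>) / \<epsilon>)) * (\<alpha> i * \<beta> i))"
    by (rule prod_mono_ennreal) (use up in auto)
  also have "\<dots> = ennreal X1 * Q"
    unfolding X1_def Q_def by (simp add: prod.distrib prod_ennreal)
  finally have h1: "(\<Prod>i<k. P i i) \<le> ennreal X1 * Q" .
  have "(\<Prod>i<k. \<beta> (\<sigma> i)) = (\<Prod>i<k. \<beta> i)"
    using prod.permute[OF sig, of \<beta>] by (simp add: comp_def)
  then have "ennreal X2 * Q = (\<Prod>i<k. ennreal (exp (- (cc i (\<sigma> i) + \<eta>) / \<epsilon>)) * (\<alpha> i * \<beta> (\<sigma> i)))"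
    unfolding X2_def Q_def by (simp add: prod.distrib prod_ennreal)
  also have "\<dots> \<le> (\<Prod>i<k. P i (\<sigma> i))"
    by (rule prod_mono_ennreal) (use lo sk in auto)
  also have "\<dots> \<le> (\<Prod>i<k. 1)"
    by (rule prod_mono_ennreal) (use le1 in auto)
  finally have h2: "ennreal X2 * Q \<le> 1" by simp
  have Qfin: "Q \<noteq> \<infinity>"
  proof
    assume "Q = \<infinity>"
    then have "ennreal X2 * Q = \<infinity>" using X2pos by (simp add: ennreal_mult_top)
    then show False using h2 by (simp add: top_unique)
  qed
  then obtain q where q: "Q = ennreal q" "q \<ge> 0" by (cases Q) auto
  have "X2 * q \<le> 1" using h2 q X2pos by (simp add: ennreal_mult[symmetric])
  then have qle: "q \<le> 1 / X2" using X2pos by (simp add: field_simps mult.commute)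
  have X1nn: "X1 \<ge> 0" unfolding X1_def by (simp add: prod_nonneg)
  have "(\<Prod>i<k. P i i) \<le> ennreal (X1 * q)" using h1 q X1nn by (simp add: ennreal_mult)
  also have "\<dots> \<le> ennreal (X1 / X2)"
    using qle X1nn X2pos by (intro ennreal_leI) (simp add: divide_simps, metis mult.assoc mult_left_mono mult.right_neutral)
  also have "X1 / X2 = exp (- ((\<Sum>i<k. cc i i) - (\<Sum>i<k. cc i (\<sigma> i)) - 2 * real k * \<eta>) / \<epsilon>)"
  proof -
    have "X1 / X2 = exp ((\<Sum>i<k. - (cc i i - \<eta>) / \<epsilon>) - (\<Sum>i<k. - (cc i (\<sigma> i) + \<eta>) / \<epsilon>))"
      unfolding X1_def X2_def by (simp add: exp_sum exp_diff)
    also have "(\<Sum>i<k. - (cc i i - \<eta>) / \<epsilon>) - (\<Sum>i<k. - (cc i (\<sigma> i) + \<eta>) / \<epsilon>)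
        = - ((\<Sum>i<k. cc i i) - (\<Sum>i<k. cc i (\<sigma> i)) - 2 * real k * \<eta>) / \<epsilon>"
      using eps by (simp add: sum_divide_distrib[symmetric] sum_subtractf sum.distrib sum_negf field_simps)
    finally show ?thesis .
  qed
  finally show ?thesis .
qed


lemma box_bound:
  fixes a :: "'a \<Rightarrow> real" and b :: "'b \<Rightarrow> real" and f :: "'a \<times> 'b \<Rightarrow> real"
  assumes N: "sigma_finite_measure \<nu>" and A: "A \<in> sets \<mu>" and B: "B \<in> sets \<nu>"
    and am: "a \<in> borel_measurable \<mu>" and bm: "b \<in> borel_measurable \<nu>"
    and fm: "f \<in> borel_measurable (\<mu> \<Otimes>\<^sub>M \<nu>)"
    and an: "\<forall>x. 0 \<le> a x" and bn: "\<forall>y. 0 \<le> b y"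
    and fe: "\<forall>x y. f (x, y) = a x * b y * exp (- c x y / \<epsilon>)"
    and eps: "\<epsilon> > 0"
    and cb: "\<forall>x\<in>A. \<forall>y\<in>B. \<bar>c x y - c0\<bar> \<le> \<eta>"
  shows "emeasure (density (\<mu> \<Otimes>\<^sub>M \<nu>) (\<lambda>z. ennreal (f z))) (A \<times> B) \<le>
          ennreal (exp (- (c0 - \<eta>) / \<epsilon>)) * ((\<integral>\<^sup>+ x. ennreal (a x) * indicator A x \<partial>\<mu>) * (\<integral>\<^sup>+ y. ennreal (b y) * indicator B y \<partial>\<nu>))"
    and "ennreal (exp (- (c0 + \<eta>) / \<epsilon>)) * ((\<integral>\<^sup>+ x. ennreal (a x) * indicator A x \<partial>\<mu>) * (\<integral>\<^sup>+ y. ennreal (b y) * indicator B y \<partial>\<nu>))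
          \<le> emeasure (density (\<mu> \<Otimes>\<^sub>M \<nu>) (\<lambda>z. ennreal (f z))) (A \<times> B)"
proof -
  have AB: "A \<times> B \<in> sets (\<mu> \<Otimes>\<^sub>M \<nu>)" using A B by simp
  have em: "emeasure (density (\<mu> \<Otimes>\<^sub>M \<nu>) (\<lambda>z. ennreal (f z))) (A \<times> B)
      = (\<integral>\<^sup>+ z. ennreal (f z) * indicator (A \<times> B) z \<partial>(\<mu> \<Otimes>\<^sub>M \<nu>))"
    using AB fm by (simp add: emeasure_density)
  have prod: "(\<integral>\<^sup>+ z. (ennreal (a (fst z)) * indicator A (fst z)) * (ennreal (b (snd z)) * indicator B (snd z)) \<partial>(\<mu> \<Otimes>\<^sub>M \<nu>))
     = (\<integral>\<^sup>+ x. ennreal (a x) * indicator A x \<partial>\<mu>) * (\<integral>\<^sup>+ y. ennreal (b y) * indicator B y \<partial>\<nu>)"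
    by (rule nn_prod[OF N]) (use am bm A B in auto)
  have gm: "(\<lambda>z. (ennreal (a (fst z)) * indicator A (fst z)) * (ennreal (b (snd z)) * indicator B (snd z))) \<in> borel_measurable (\<mu> \<Otimes>\<^sub>M \<nu>)"
    using am bm A B by measurable
  have pt_up: "ennreal (f z) * indicator (A \<times> B) z \<le> ennreal (exp (- (c0 - \<eta>) / \<epsilon>)) *
      ((ennreal (a (fst z)) * indicator A (fst z)) * (ennreal (b (snd z)) * indicator B (snd z)))" for z
  proof (cases "z \<in> A \<times> B")
    case True
    obtain x y where z: "z = (x, y)" by (cases z)
    have "\<bar>c x y - c0\<bar> \<le> \<eta>" using cb True z by auto
    then have "exp (- c x y / \<epsilon>) \<le> exp (- (c0 - \<eta>) / \<epsilon>)" using eps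
      by (auto simp: divide_simps abs_le_iff)
    then have "a x * b y * exp (- c x y / \<epsilon>) \<le> exp (- (c0 - \<eta>) / \<epsilon>) * (a x * b y)"
      using an bn by (simp add: mult_left_mono mult.commute mult_nonneg_nonneg)
    then show ?thesis using True z fe an bn
      by (simp add: ennreal_mult[symmetric] ennreal_leI mult_nonneg_nonneg)
  qed simp
  have pt_lo: "ennreal (exp (- (c0 + \<eta>) / \<epsilon>)) *
      ((ennreal (a (fst z)) * indicator A (fst z)) * (ennreal (b (snd z)) * indicator B (snd z)))
      \<le> ennreal (f z) * indicator (A \<times> B) z" for z
  proof (cases "z \<in> A \<times> B")
    case True
    obtain x y where z: "z = (x, y)" by (cases z)
    have "\<bar>c x y - c0\<bar> \<le> \<eta>" using cb True z by auto
    then have "exp (- (c0 + \<eta>) / \<epsilon>) \<le> exp (- c x y / \<epsilon>)" using eps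
      by (auto simp: divide_simps abs_le_iff)
    then have "exp (- (c0 + \<eta>) / \<epsilon>) * (a x * b y) \<le> a x * b y * exp (- c x y / \<epsilon>)"
      using an bn by (simp add: mult_left_mono mult.commute mult_nonneg_nonneg)
    then show ?thesis using True z fe an bn
      by (simp add: ennreal_mult[symmetric] ennreal_leI mult_nonneg_nonneg)
  qed (cases z, auto simp: indicator_def)
  show "emeasure (density (\<mu> \<Otimes>\<^sub>M \<nu>) (\<lambda>z. ennreal (f z))) (A \<times> B) \<le>
          ennreal (exp (- (c0 - \<eta>) / \<epsilon>)) * ((\<integral>\<^sup>+ x. ennreal (a x) * indicator A x \<partial>\<mu>) * (\<integral>\<^sup>+ y. ennreal (b y) * indicator B y \<partial>\<nu>))"
    unfolding em prod[symmetric]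
    by (subst nn_integral_cmult[OF gm, symmetric]) (rule nn_integral_mono, rule pt_up)
  show "ennreal (exp (- (c0 + \<eta>) / \<epsilon>)) * ((\<integral>\<^sup>+ x. ennreal (a x) * indicator A x \<partial>\<mu>) * (\<integral>\<^sup>+ y. ennreal (b y) * indicator B y \<partial>\<nu>))
          \<le> emeasure (density (\<mu> \<Otimes>\<^sub>M \<nu>) (\<lambda>z. ennreal (f z))) (A \<times> B)"
    unfolding em prod[symmetric]
    by (subst nn_integral_cmult[OF gm, symmetric]) (rule nn_integral_mono, rule pt_lo)
qed

lemma cont_r:
  fixes c :: "'a::metric_space \<Rightarrow> 'b::metric_space \<Rightarrow> real"
  assumes "continuous_on UNIV (\<lambda>z. c (fst z) (snd z))" "\<eta> > 0"
  shows "\<exists>r>0. \<forall>x' y'. dist x' x < r \<longrightarrow> dist y' y < r \<longrightarrow> \<bar>c x' y' - c x y\<bar> \<le> \<eta>"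
proof -
  obtain d where d: "d > 0" "\<forall>z'. dist z' (x, y) < d \<longrightarrow> dist (c (fst z') (snd z')) (c x y) < \<eta>"
    using assms unfolding continuous_on_iff by (metis UNIV_I fst_conv snd_conv)
  show ?thesis
  proof (intro exI[of _ "d/2"] conjI allI impI)
    fix x' y' assume h: "dist x' x < d/2" "dist y' y < d/2"
    have "dist (x', y') (x, y) \<le> dist x' x + dist y' y"
      unfolding dist_Pair_Pair by (rule real_sqrt_sum_squares_triangle_ineq[of _ 0 0, simplified]
        | simp add: sqrt_sum_squares_le_sum)
    then have "dist (x', y') (x, y) < d" using h by simp
    then show "\<bar>c x' y' - c x y\<bar> \<le> \<eta>" using d(2)[rule_format, of "(x', y')"] by (simp add: dist_real_def)
  qed (use d in simp)
qed


lemma sets_coupling: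
  fixes \<mu> :: "('a::second_countable_topology) measure" and \<nu> :: "('b::second_countable_topology) measure"
  assumes "coupling \<mu> \<nu> \<pi>" "sets \<mu> = sets borel" "sets \<nu> = sets borel"
  shows "sets \<pi> = sets borel" "prob_space \<pi>"
proof -
  have "sets \<pi> = sets (\<mu> \<Otimes>\<^sub>M \<nu>)" using assms(1) unfolding coupling_def by simp
  also have "\<dots> = sets (borel \<Otimes>\<^sub>M borel)" by (rule sets_pair_measure_cong) (use assms in auto)
  also have "\<dots> = sets borel" by (simp only: borel_prod)
  finally show "sets \<pi> = sets borel" .
  show "prob_space \<pi>" using assms(1) unfolding coupling_def by simp
qed

lemma weak_lower:
  fixes \<pi> :: "real \<Rightarrow> ('c::metric_space) measure"
  assumes P: "\<forall>\<epsilon>>0. prob_space (\<pi> \<epsilon>) \<and> sets (\<pi> \<epsilon>) = sets borel"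
    and Ps: "prob_space \<pi>s" "sets \<pi>s = sets borel"
    and W: "weak_conv_at0 \<pi> \<pi>s" and z0: "z0 \<in> support \<pi>s" and U: "open U" "z0 \<in> U"
  shows "\<exists>q>0. eventually (\<lambda>\<epsilon>. q \<le> measure (\<pi> \<epsilon>) U) (at_right 0)"
proof -
  obtain r where r: "r > 0" "ball z0 r \<subseteq> U" using U open_contains_ball by blast
  define g where "g z = max 0 (1 - 2 * dist z z0 / r)" for z
  have gc: "continuous_on UNIV g" unfolding g_def by (intro continuous_intros) (use r in auto)
  have g01: "0 \<le> g z" "g z \<le> 1" for z using r unfolding g_def by auto
  have gb: "bounded (range g)" unfolding bounded_iff using g01 by (intro exI[of _ 1]) auto
  have gU: "g z \<le> indicator U z" for z
  proof (cases "z \<in> U")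
    case False
    then have "z \<notin> ball z0 r" using r by auto
    then have "dist z z0 \<ge> r" by (simp add: dist_commute)
    then have "1 - 2 * dist z z0 / r \<le> 0" using r by (simp add: field_simps)
    then show ?thesis using False unfolding g_def by simp
  qed (use g01 in simp)
  have gB: "1/2 * indicator (ball z0 (r/4)) z \<le> g z" for z
  proof (cases "z \<in> ball z0 (r/4)")
    case True
    then have "dist z z0 < r/4" by (simp add: dist_commute)
    then have "1/2 \<le> 1 - 2 * dist z z0 / r" using r by (simp add: field_simps)
    then show ?thesis using True unfolding g_def by simp
  qed (use g01 in simp)
  have meas: "g \<in> borel_measurable M" if "sets M = sets borel" for M :: "'c measure"
    by (subst measurable_cong_sets[OF that refl]) (rule borel_measurable_continuous_onI[OF gc])
  have integ: "integrable M g" if "sets M = sets borel" "finite_measure M" for M :: "'c measure"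
    by (rule finite_measure.integrable_const_bound[where B=1]) (use that meas g01 in auto)
  have integI: "integrable M (indicator S :: 'c \<Rightarrow> real)" if "sets M = sets borel" "finite_measure M" "S \<in> sets borel" for M S
  proof -
    have "S \<in> sets M" using that by simp
    then show ?thesis using that
      by (intro finite_measure.integrable_const_bound[where B=1]) (auto simp: indicator_def)
  qed
  define L where "L = integral\<^sup>L \<pi>s g"
  have fs: "finite_measure \<pi>s" using Ps by (simp add: prob_space_def)
  have "emeasure \<pi>s (ball z0 (r/4)) \<noteq> 0" using z0 r unfolding support_def by auto
  then have mb: "measure \<pi>s (ball z0 (r/4)) > 0"
    using fs by (simp add: finite_measure.emeasure_eq_measure zero_less_measure_iff)
  have "integral\<^sup>L \<pi>s (\<lambda>z. 1/2 * indicator (ball z0 (r/4)) z) \<le> L"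
    unfolding L_def
    by (rule integral_mono) (use integ[OF Ps(2) fs] integI[OF Ps(2) fs] gB in auto)
  then have Lpos: "L > 0" using mb Ps(2) by simp
  have "((\<lambda>\<epsilon>. integral\<^sup>L (\<pi> \<epsilon>) g) \<longlongrightarrow> L) (at_right 0)"
    using W gc gb unfolding weak_conv_at0_def L_def by blast
  then have ev: "eventually (\<lambda>\<epsilon>. L/2 < integral\<^sup>L (\<pi> \<epsilon>) g) (at_right 0)"
    using Lpos by (intro order_tendstoD(1)) auto
  have "eventually (\<lambda>\<epsilon>. L/2 \<le> measure (\<pi> \<epsilon>) U) (at_right 0)"
    using ev eventually_at_right_less[of 0]
  proof eventually_elim
    case (elim \<epsilon>)
    then have pe: "prob_space (\<pi> \<epsilon>)" "sets (\<pi> \<epsilon>) = sets borel" using P by auto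
    then have fe: "finite_measure (\<pi> \<epsilon>)" by (simp add: prob_space_def)
    have Us: "U \<in> sets borel" using U by simp
    have "integral\<^sup>L (\<pi> \<epsilon>) g \<le> integral\<^sup>L (\<pi> \<epsilon>) (indicator U)"
      by (rule integral_mono) (use integ[OF pe(2) fe] integI[OF pe(2) fe Us] gU in auto)
    also have "\<dots> = measure (\<pi> \<epsilon>) U" using pe Us fe by (simp add: finite_measure.emeasure_finite)
    finally show ?case using elim by simp
  qed
  then show ?thesis using Lpos by (intro exI[of _ "L/2"]) auto
qed


lemma key_product:
  fixes \<mu> :: "('a::polish_space) measure" and \<nu> :: "('b::polish_space) measure"
    and c :: "'a \<Rightarrow> 'b \<Rightarrow> real" and \<pi> :: "('a \<times> 'b) measure"
  assumes mu: "prob_space \<mu>" "sets \<mu> = sets borel" and nu: "prob_space \<nu>" "sets \<nu> = sets borel"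
    and cc: "continuous_on UNIV (\<lambda>z. c (fst z) (snd z))"
    and ci: "cyclically_invariant c \<epsilon> \<mu> \<nu> \<pi>" and eps: "\<epsilon> > 0"
    and sig: "\<sigma> permutes {..<k}"
    and A: "\<forall>i<k. A i \<in> sets borel" and B: "\<forall>i<k. B i \<in> sets borel"
    and bnd: "\<forall>i<k. \<forall>j<k. \<forall>x\<in>A i. \<forall>y\<in>B j. \<bar>c x y - c (xs i) (ys j)\<bar> \<le> \<eta>"
  shows "(\<Prod>i<k. measure \<pi> (A i \<times> B i)) \<le>
     exp (- ((\<Sum>i<k. c (xs i) (ys i)) - (\<Sum>i<k. c (xs i) (ys (\<sigma> i))) - 2 * real k * \<eta>) / \<epsilon>)"
proof -
  obtain f :: "'a \<times> 'b \<Rightarrow> real" where fm: "f \<in> borel_measurable (\<mu> \<Otimes>\<^sub>M \<nu>)" and fp: "\<forall>z. 0 < f z"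
    and pd: "\<pi> = density (\<mu> \<Otimes>\<^sub>M \<nu>) (\<lambda>z. ennreal (f z))"
    and cyc: "\<forall>k::nat. \<forall>(x :: nat \<Rightarrow> 'a) (y :: nat \<Rightarrow> 'b). 1 \<le> k \<longrightarrow>
           (\<Prod>i<k. f (x i, y i)) =
           exp (- (1 / \<epsilon>) * ((\<Sum>i<k. c (x i) (y i)) - (\<Sum>i<k. c (x i) (y (Suc i mod k)))))
           * (\<Prod>i<k. f (x i, y (Suc i mod k)))"
    using ci unfolding cyclically_invariant_def by blast
  have piP: "prob_space \<pi>" using ci unfolding cyclically_invariant_def coupling_def by blast
  define x0 :: 'a where "x0 = undefined"
  define y0 :: 'b where "y0 = undefined"
  define a where "a x = f (x, y0) * exp (c x y0 / \<epsilon>)" for x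
  define b where "b y = f (x0, y) * exp (c x0 y / \<epsilon>) * exp (- c x0 y0 / \<epsilon>) / f (x0, y0)" for y
  have fe: "\<forall>x y. f (x, y) = a x * b y * exp (- c x y / \<epsilon>)"
    unfolding a_def b_def using decomp[OF fp eps cyc] by blast
  have an: "\<forall>x. 0 \<le> a x" unfolding a_def using fp by (simp add: less_imp_le)
  have bn: "\<forall>y. 0 \<le> b y" unfolding b_def using fp by (simp add: less_imp_le)
  have spn: "space \<nu> = UNIV" using nu(2) by (metis sets_eq_imp_space_eq space_borel)
  have spm: "space \<mu> = UNIV" using mu(2) by (metis sets_eq_imp_space_eq space_borel)
  have cm1: "(\<lambda>x. c x y0) \<in> borel_measurable \<mu>"
  proof -
    have "(\<lambda>x. c x y0) \<in> borel_measurable borel"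
      using borel_measurable_continuous_Pair[OF measurable_ident_sets[OF refl] measurable_const cc] by simp
    then show ?thesis by (subst measurable_cong_sets[OF mu(2) refl])
  qed
  have cm2: "(\<lambda>y. c x0 y) \<in> borel_measurable \<nu>"
  proof -
    have "(\<lambda>y. c x0 y) \<in> borel_measurable borel"
      using borel_measurable_continuous_Pair[OF measurable_const measurable_ident_sets[OF refl] cc] by simp
    then show ?thesis by (subst measurable_cong_sets[OF nu(2) refl])
  qed
  have fm1: "(\<lambda>x. f (x, y0)) \<in> borel_measurable \<mu>"
  proof -
    have "(\<lambda>x. (x, y0)) \<in> measurable \<mu> (\<mu> \<Otimes>\<^sub>M \<nu>)"
      using spn by (intro measurable_Pair) auto
    then show ?thesis using fm by (rule measurable_compose)
  qed
  have fm2: "(\<lambda>y. f (x0, y)) \<in> borel_measurable \<nu>"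
  proof -
    have "(\<lambda>y. (x0, y)) \<in> measurable \<nu> (\<mu> \<Otimes>\<^sub>M \<nu>)"
      using spm by (intro measurable_Pair) auto
    then show ?thesis using fm by (rule measurable_compose)
  qed
  have am: "a \<in> borel_measurable \<mu>" unfolding a_def using fm1 cm1 by measurable
  have bm: "b \<in> borel_measurable \<nu>" unfolding b_def using fm2 cm2 by measurable
  have sfn: "sigma_finite_measure \<nu>" using nu(1) by (simp add: prob_space_def finite_measure_def)
  define P where "P i j = emeasure \<pi> (A i \<times> B j)" for i j
  define \<alpha> where "\<alpha> i = (\<integral>\<^sup>+ x. ennreal (a x) * indicator (A i) x \<partial>\<mu>)" for i
  define \<beta> where "\<beta> j = (\<integral>\<^sup>+ y. ennreal (b y) * indicator (B j) y \<partial>\<nu>)" for j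
  define cc' where "cc' i j = c (xs i) (ys j)" for i j
  have Ai: "A i \<in> sets \<mu>" if "i < k" for i using A that mu(2) by simp
  have Bj: "B j \<in> sets \<nu>" if "j < k" for j using B that nu(2) by simp
  have up: "\<forall>i<k. \<forall>j<k. P i j \<le> ennreal (exp (- (cc' i j - \<eta>) / \<epsilon>)) * (\<alpha> i * \<beta> j)"
    unfolding P_def \<alpha>_def \<beta>_def cc'_def pd
    using box_bound(1)[OF sfn Ai Bj am bm fm an bn fe eps] bnd by blast
  have lo: "\<forall>i<k. \<forall>j<k. ennreal (exp (- (cc' i j + \<eta>) / \<epsilon>)) * (\<alpha> i * \<beta> j) \<le> P i j"
    unfolding P_def \<alpha>_def \<beta>_def cc'_def pd
    using box_bound(2)[OF sfn Ai Bj am bm fm an bn fe eps] bnd by blast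
  have le1: "\<forall>i j. P i j \<le> 1" unfolding P_def using piP by (simp add: prob_space.emeasure_le_1)
  have "(\<Prod>i<k. P i i) \<le> ennreal (exp (- ((\<Sum>i<k. cc' i i) - (\<Sum>i<k. cc' i (\<sigma> i)) - 2 * real k * \<eta>) / \<epsilon>))"
    by (rule perm_bound[OF sig eps up lo le1])
  moreover have "(\<Prod>i<k. P i i) = ennreal (\<Prod>i<k. measure \<pi> (A i \<times> B i))"
    unfolding P_def using piP
    by (simp add: finite_measure.emeasure_eq_measure prob_space_def prod_ennreal)
  ultimately show ?thesis unfolding cc'_def by (simp add: ennreal_le_iff)
qed


lemma local_bound:
  fixes \<mu> :: "('a::polish_space) measure" and \<nu> :: "('b::polish_space) measure"
    and c :: "'a \<Rightarrow> 'b \<Rightarrow> real"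
    and \<pi> :: "real \<Rightarrow> ('a \<times> 'b) measure" and \<pi>\<^sub>s :: "('a \<times> 'b) measure"
  assumes mu: "prob_space \<mu>" "sets \<mu> = sets borel" and nu: "prob_space \<nu>" "sets \<nu> = sets borel"
    and cc: "continuous_on UNIV (\<lambda>z. c (fst z) (snd z))"
    and ci: "\<forall>\<epsilon>>0. cyclically_invariant c \<epsilon> \<mu> \<nu> (\<pi> \<epsilon>)"
    and cs: "coupling \<mu> \<nu> \<pi>\<^sub>s" and W: "weak_conv_at0 \<pi> \<pi>\<^sub>s"
    and lt: "ereal t1 < rate_I c (support \<pi>\<^sub>s) x y"
  shows "\<exists>U. open U \<and> (x, y) \<in> U \<and> eventually (\<lambda>\<epsilon>. measure (\<pi> \<epsilon>) U \<le> exp (- t1 / \<epsilon>)) (at_right 0)"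
proof -
  obtain k :: nat and xs :: "nat \<Rightarrow> 'a" and ys :: "nat \<Rightarrow> 'b" and \<sigma> where k: "2 \<le> k" and x0: "xs 0 = x" and y0: "ys 0 = y"
    and G: "\<forall>i\<in>{1..<k}. (xs i, ys i) \<in> support \<pi>\<^sub>s" and sig: "\<sigma> permutes {..<k}"
    and D: "t1 < (\<Sum>i<k. c (xs i) (ys i)) - (\<Sum>i<k. c (xs i) (ys (\<sigma> i)))"
    using lt unfolding rate_I_def less_Sup_iff by auto
  define D where "D = (\<Sum>i<k. c (xs i) (ys i)) - (\<Sum>i<k. c (xs i) (ys (\<sigma> i)))"
  define \<eta> where "\<eta> = (D - t1) / (4 * real k)"
  define s where "s = D - 2 * real k * \<eta>"
  have kpos: "real k > 0" using k by simp
  have etapos: "\<eta> > 0" unfolding \<eta>_def using D kpos D_def by simp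
  have st: "s - t1 = (D - t1) / 2" unfolding s_def \<eta>_def using kpos by (simp add: field_simps)
  have stpos: "s - t1 > 0" using st D D_def by simp
  have Pev: "\<forall>p\<in>{..<k} \<times> {..<k}. eventually (\<lambda>r. \<forall>x' y'. dist x' (xs (fst p)) < r \<longrightarrow> dist y' (ys (snd p)) < r
      \<longrightarrow> \<bar>c x' y' - c (xs (fst p)) (ys (snd p))\<bar> \<le> \<eta>) (at_right 0)"
  proof
    fix p assume "p \<in> {..<k} \<times> {..<k}"
    obtain r0 where r0: "r0 > 0" "\<forall>x' y'. dist x' (xs (fst p)) < r0 \<longrightarrow> dist y' (ys (snd p)) < r0
      \<longrightarrow> \<bar>c x' y' - c (xs (fst p)) (ys (snd p))\<bar> \<le> \<eta>"
      using cont_r[OF cc etapos] by blast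
    show "eventually (\<lambda>r. \<forall>x' y'. dist x' (xs (fst p)) < r \<longrightarrow> dist y' (ys (snd p)) < r
      \<longrightarrow> \<bar>c x' y' - c (xs (fst p)) (ys (snd p))\<bar> \<le> \<eta>) (at_right 0)"
      unfolding eventually_at_right_field using r0 by (intro exI[of _ r0]) auto
  qed
  have "eventually (\<lambda>r. \<forall>p\<in>{..<k} \<times> {..<k}. \<forall>x' y'. dist x' (xs (fst p)) < r \<longrightarrow> dist y' (ys (snd p)) < r
      \<longrightarrow> \<bar>c x' y' - c (xs (fst p)) (ys (snd p))\<bar> \<le> \<eta>) (at_right 0)"
    by (rule eventually_ball_finite) (use Pev in auto)
  then obtain b0 where b0: "b0 > 0" "\<forall>r>0. r < b0 \<longrightarrow> (\<forall>p\<in>{..<k} \<times> {..<k}. \<forall>x' y'. dist x' (xs (fst p)) < r \<longrightarrow> dist y' (ys (snd p)) < r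
      \<longrightarrow> \<bar>c x' y' - c (xs (fst p)) (ys (snd p))\<bar> \<le> \<eta>)"
    unfolding eventually_at_right_field by auto
  define r where "r = b0 / 2"
  have rpos: "r > 0" using b0 r_def by simp
  have rb: "\<forall>i<k. \<forall>j<k. \<forall>x'\<in>ball (xs i) r. \<forall>y'\<in>ball (ys j) r. \<bar>c x' y' - c (xs i) (ys j)\<bar> \<le> \<eta>"
  proof (intro allI impI ballI)
    fix i j x' y' assume h: "i < k" "j < k" "x' \<in> ball (xs i) r" "y' \<in> ball (ys j) r"
    have "r < b0" using b0 r_def by simp
    then show "\<bar>c x' y' - c (xs i) (ys j)\<bar> \<le> \<eta>" using b0(2) rpos h
      by (auto simp: dist_commute)
  qed
  define A where "A i = ball (xs i) r" for i
  define B where "B j = ball (ys j) r" for j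
  have Ps: "prob_space \<pi>\<^sub>s" "sets \<pi>\<^sub>s = sets borel" using sets_coupling[OF cs mu(2) nu(2)] by auto
  have Pe: "\<forall>\<epsilon>>0. prob_space (\<pi> \<epsilon>) \<and> sets (\<pi> \<epsilon>) = sets borel"
    using ci sets_coupling[OF _ mu(2) nu(2)] unfolding cyclically_invariant_def by blast
  have "\<forall>i\<in>{1..<k}. \<exists>q>0. eventually (\<lambda>\<epsilon>. q \<le> measure (\<pi> \<epsilon>) (A i \<times> B i)) (at_right 0)"
  proof
    fix i assume "i \<in> {1..<k}"
    then show "\<exists>q>0. eventually (\<lambda>\<epsilon>. q \<le> measure (\<pi> \<epsilon>) (A i \<times> B i)) (at_right 0)"
      using weak_lower[OF Pe Ps W, of "(xs i, ys i)" "A i \<times> B i"] G rpos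
      unfolding A_def B_def by (auto intro: open_Times)
  qed
  then obtain q where q: "\<forall>i\<in>{1..<k}. q i > 0 \<and> eventually (\<lambda>\<epsilon>. q i \<le> measure (\<pi> \<epsilon>) (A i \<times> B i)) (at_right 0)"
    by metis
  define R where "R = (\<Prod>i\<in>{1..<k}. q i)"
  have Rpos: "R > 0" unfolding R_def using q by (intro prod_pos) auto
  have ev1: "eventually (\<lambda>\<epsilon>. \<forall>i\<in>{1..<k}. q i \<le> measure (\<pi> \<epsilon>) (A i \<times> B i)) (at_right 0)"
    by (rule eventually_ball_finite) (use q in auto)
  have ev2: "eventually (\<lambda>\<epsilon>. \<epsilon> < (s - t1) / (\<bar>ln R\<bar> + 1)) (at_right (0::real))"
    unfolding eventually_at_right_field using stpos
    by (intro exI[of _ "(s - t1) / (\<bar>ln R\<bar> + 1)"]) (auto simp: divide_pos_pos)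
  have "eventually (\<lambda>\<epsilon>. measure (\<pi> \<epsilon>) (A 0 \<times> B 0) \<le> exp (- t1 / \<epsilon>)) (at_right 0)"
    using ev1 ev2 eventually_at_right_less[of "0::real"]
  proof eventually_elim
    case (elim \<epsilon>)
    have eps: "\<epsilon> > 0" using elim by simp
    have pe: "prob_space (\<pi> \<epsilon>)" using Pe eps by blast
    have kp: "(\<Prod>i<k. measure (\<pi> \<epsilon>) (A i \<times> B i)) \<le> exp (- (D - 2 * real k * \<eta>) / \<epsilon>)"
      unfolding D_def
      by (rule key_product[OF mu nu cc ci[rule_format, OF eps] eps sig]) (use rb in \<open>auto simp: A_def B_def\<close>)
    have split: "{..<k} = insert 0 {1..<k}" using k by auto
    define p0 where "p0 = measure (\<pi> \<epsilon>) (A 0 \<times> B 0)"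
    have p0n: "p0 \<ge> 0" unfolding p0_def by simp
    have "R \<le> (\<Prod>i\<in>{1..<k}. measure (\<pi> \<epsilon>) (A i \<times> B i))"
      unfolding R_def by (rule prod_mono) (use elim q in \<open>auto simp: less_imp_le\<close>)
    then have "p0 * R \<le> p0 * (\<Prod>i\<in>{1..<k}. measure (\<pi> \<epsilon>) (A i \<times> B i))"
      using p0n by (simp add: mult_left_mono)
    also have "\<dots> = (\<Prod>i<k. measure (\<pi> \<epsilon>) (A i \<times> B i))"
      unfolding split p0_def by simp
    finally have h: "p0 * R \<le> exp (- s / \<epsilon>)" using kp s_def by simp
    have "\<epsilon> * \<bar>ln R\<bar> \<le> s - t1"
    proof -
      have "\<epsilon> * (\<bar>ln R\<bar> + 1) < s - t1" using elim by (simp add: field_simps)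
      then show ?thesis using eps by (simp add: algebra_simps)
    qed
    moreover have "\<epsilon> * (- \<bar>ln R\<bar>) \<le> \<epsilon> * ln R"
      by (rule mult_left_mono) (use eps in auto)
    ultimately have "- s / \<epsilon> \<le> ln R - t1 / \<epsilon>" using eps
      by (simp add: field_simps)
    then have "exp (- s / \<epsilon>) \<le> exp (ln R - t1 / \<epsilon>)" by simp
    also have "\<dots> = R * exp (- t1 / \<epsilon>)" using Rpos by (simp add: exp_diff exp_minus field_simps)
    finally have "p0 * R \<le> R * exp (- t1 / \<epsilon>)" using h by simp
    then show ?case using Rpos unfolding p0_def by (simp add: mult.commute)
  qed
  then show ?thesis using rpos x0 y0 unfolding A_def B_def
    by (intro exI[of _ "ball x r \<times> ball y r"]) (auto intro: open_Times)
qed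


theorem corollary4p3:
  fixes \<mu> :: "('a::polish_space) measure" and \<nu> :: "('b::polish_space) measure"
    and c :: "'a \<Rightarrow> 'b \<Rightarrow> real"
    and \<pi> :: "real \<Rightarrow> ('a \<times> 'b) measure" and \<pi>\<^sub>s :: "('a \<times> 'b) measure"
    and C :: "('a \<times> 'b) set"
  assumes "prob_space \<mu>" and "sets \<mu> = sets borel"
    and "prob_space \<nu>" and "sets \<nu> = sets borel"
    and "continuous_on UNIV (\<lambda>z. c (fst z) (snd z))" and "\<forall>x y. 0 \<le> c x y"
    and "\<forall>\<epsilon>>0. cyclically_invariant c \<epsilon> \<mu> \<nu> (\<pi> \<epsilon>)"
    and "coupling \<mu> \<nu> \<pi>\<^sub>s" and "weak_conv_at0 \<pi> \<pi>\<^sub>s"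
    and "compact C"
  shows "Limsup (at_right 0) (\<lambda>\<epsilon>. eps_log \<epsilon> (measure (\<pi> \<epsilon>) C))
           \<le> - (INF z\<in>C. rate_I c (support \<pi>\<^sub>s) (fst z) (snd z))"
proof -
  note mu = assms(1,2) and nu = assms(3,4) and cc = assms(5) and ci = assms(7)
    and cs = assms(8) and W = assms(9) and cpt = assms(10)
  define m where "m = (INF z\<in>C. rate_I c (support \<pi>\<^sub>s) (fst z) (snd z))"
  define L where "L = Limsup (at_right 0) (\<lambda>\<epsilon>. eps_log \<epsilon> (measure (\<pi> \<epsilon>) C))"
  have Pe: "\<forall>\<epsilon>>0. prob_space (\<pi> \<epsilon>) \<and> sets (\<pi> \<epsilon>) = sets borel"
    using ci sets_coupling[OF _ mu(2) nu(2)] unfolding cyclically_invariant_def by blast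
  have Cs: "C \<in> sets borel" using cpt by (simp add: compact_imp_closed)
  have main: "L \<le> ereal (- t)" if tm: "ereal t < m" for t
  proof -
    obtain t1 where t1: "ereal t < ereal t1" "ereal t1 < m" using ereal_dense2[OF tm] by auto
    have "\<forall>z\<in>C. \<exists>U. open U \<and> z \<in> U \<and> eventually (\<lambda>\<epsilon>. measure (\<pi> \<epsilon>) U \<le> exp (- t1 / \<epsilon>)) (at_right 0)"
    proof
      fix z assume zC: "z \<in> C"
      have "m \<le> rate_I c (support \<pi>\<^sub>s) (fst z) (snd z)" unfolding m_def using zC by (rule INF_lower)
      then have "ereal t1 < rate_I c (support \<pi>\<^sub>s) (fst z) (snd z)" using t1 by simp
      from local_bound[OF mu nu cc ci cs W this]
      show "\<exists>U. open U \<and> z \<in> U \<and> eventually (\<lambda>\<epsilon>. measure (\<pi> \<epsilon>) U \<le> exp (- t1 / \<epsilon>)) (at_right 0)"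
        by simp
    qed
    then obtain Uf where Uf: "\<forall>z\<in>C. open (Uf z) \<and> z \<in> Uf z \<and> eventually (\<lambda>\<epsilon>. measure (\<pi> \<epsilon>) (Uf z) \<le> exp (- t1 / \<epsilon>)) (at_right 0)"
      by metis
    obtain T where T: "T \<subseteq> C" "finite T" "C \<subseteq> \<Union> (Uf ` T)"
      by (rule compactE_image[OF cpt, of C Uf]) (use Uf in auto)
    define N where "N = real (card T) + 1"
    have N1: "N \<ge> 1" unfolding N_def by simp
    have lnN: "ln N \<ge> 0" using N1 by simp
    have gap: "t1 - t > 0" using t1 by simp
    have ev1: "eventually (\<lambda>\<epsilon>. \<forall>z\<in>T. measure (\<pi> \<epsilon>) (Uf z) \<le> exp (- t1 / \<epsilon>)) (at_right 0)"
      by (rule eventually_ball_finite) (use T Uf in auto)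
    have ev2: "eventually (\<lambda>\<epsilon>. \<epsilon> < (t1 - t) / (ln N + 1)) (at_right (0::real))"
      unfolding eventually_at_right_field using gap lnN
      by (intro exI[of _ "(t1 - t) / (ln N + 1)"]) (auto simp: divide_pos_pos)
    have "eventually (\<lambda>\<epsilon>. eps_log \<epsilon> (measure (\<pi> \<epsilon>) C) \<le> ereal (- t)) (at_right 0)"
      using ev1 ev2 eventually_at_right_less[of "0::real"]
    proof eventually_elim
      case (elim \<epsilon>)
      have eps: "\<epsilon> > 0" using elim by simp
      have pe: "prob_space (\<pi> \<epsilon>)" "sets (\<pi> \<epsilon>) = sets borel" using Pe eps by auto
      have fm: "finite_measure (\<pi> \<epsilon>)" using pe by (simp add: prob_space_def)
      have Us: "\<And>z. z \<in> T \<Longrightarrow> Uf z \<in> sets (\<pi> \<epsilon>)" using Uf T pe by auto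
      have UT: "\<Union> (Uf ` T) \<in> sets (\<pi> \<epsilon>)" using Us T by auto
      define p where "p = measure (\<pi> \<epsilon>) C"
      have "p \<le> measure (\<pi> \<epsilon>) (\<Union> (Uf ` T))"
        unfolding p_def by (rule finite_measure.finite_measure_mono[OF fm T(3) UT])
      also have "\<dots> \<le> (\<Sum>z\<in>T. measure (\<pi> \<epsilon>) (Uf z))"
        by (rule measure_UNION_le) (use T Us in auto)
      also have "\<dots> \<le> (\<Sum>z\<in>T. exp (- t1 / \<epsilon>))"
        by (rule sum_mono) (use elim in auto)
      also have "\<dots> \<le> N * exp (- t1 / \<epsilon>)" unfolding N_def by (simp add: algebra_simps)
      finally have pN: "p \<le> N * exp (- t1 / \<epsilon>)" .
      show ?case
      proof (cases "p = 0")
        case True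
        then show ?thesis unfolding eps_log_def p_def by simp
      next
        case False
        then have pp: "p > 0" unfolding p_def by (simp add: zero_less_measure_iff)
        have "ln p \<le> ln (N * exp (- t1 / \<epsilon>))" using pp pN N1 by simp
        also have "\<dots> = ln N - t1 / \<epsilon>" using N1 by (simp add: ln_mult)
        finally have "\<epsilon> * ln p \<le> \<epsilon> * (ln N - t1 / \<epsilon>)" using eps by (simp add: mult_left_mono)
        also have "\<dots> = \<epsilon> * ln N - t1" using eps by (simp add: field_simps)
        also have "\<dots> \<le> - t"
        proof -
          have "\<epsilon> * (ln N + 1) < t1 - t" using elim lnN by (simp add: field_simps)
          then show ?thesis using eps by (simp add: algebra_simps)
        qed
        finally show ?thesis using False unfolding eps_log_def p_def by simp
      qed
    qed
    then show ?thesis unfolding L_def by (rule Limsup_bounded)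
  qed
  show ?thesis
  proof (rule ccontr)
    assume "\<not> ?thesis"
    then have "- m < L" unfolding L_def m_def by simp
    then have "- L < m" by (simp add: ereal_uminus_less_reorder)
    then obtain t where t: "- L < ereal t" "ereal t < m" using ereal_dense2 by blast
    have "L \<le> ereal (- t)" using main[OF t(2)] .
    then have "ereal t \<le> - L" by (metis ereal_minus_le_minus ereal_uminus_uminus uminus_ereal.simps(1))
    then show False using t(1) by simp
  qed
qed

end
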